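(* Let $n\in\mathbb N$ and $b=n^2+1$. Then for every $m\in\{2,3,\dots,n\}$, the number $(m\cdot n)^2$ is antipalindromic in base $b$.
   Context: For an integer $b\ge 2$, every natural number $x$ has a unique base-$b$ expansion $x=a_\ell b^\ell+\dots+a_1b+a_0$ with $a_0,\dots,a_\ell\in\{0,1,\dots,b-1\}$ and $a_\ell\neq 0$. The number $x$ is antipalindromic in base $b$ if $a_j=b-1-a_{\ell-j}$ for all $j\in\{0,1,\dots,\ell\}$. *)

theory Defs
  imports Main
begin

definition is_base_expansion :: "nat \<Rightarrow> nat \<Rightarrow> nat \<Rightarrow> (nat \<Rightarrow> nat) \<Rightarrow> bool" where
  "is_base_expansion b x l a \<longleftrightarrow>
     (\<forall>j\<le>l. a j < b) \<and> a l \<noteq> 0 \<and> x = (\<Sum>j\<le>l. a j * b ^ j)"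

definition antipalindromic :: "nat \<Rightarrow> nat \<Rightarrow> bool" where
  "antipalindromic b x \<longleftrightarrow>
     (\<exists>l a. is_base_expansion b x l a \<and> (\<forall>j\<le>l. a j = b - 1 - a (l - j)))"

end

theory Submission
  imports Defs
begin

lemma gen: "M * N = (N + 1 - M) + (M - 1) * (N + 1)" if h1: "1 \<le> M" and h2: "M \<le> N" for M N :: nat
proof -
  define k where "k = M - 1"
  have k: "M = k + 1" using h1 k_def by simp
  define d where "d = N - M"
  have d: "N = M + d" using h2 d_def by simp
  have e: "N + 1 - M = d + 1" "M - 1 = k" using d k by auto
  have "(k+1) * (k+1+d) = (d + 1) + k * (k+1+d + 1)" by (simp add: algebra_simps)
  thus ?thesis unfolding e using d k by simp
qed

theorem mainTheorem10:
  fixes n m b :: nat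
  assumes "b = n\<^sup>2 + 1"
    and "m \<in> {2..n}"
  shows "antipalindromic b ((m * n)\<^sup>2)"
proof -
  have m2: "2 \<le> m" "m \<le> n" using assms(2) by auto
  have "m * m \<le> n * n" using m2 by (simp add: mult_le_mono)
  hence le: "m^2 \<le> n^2" by (simp add: power2_eq_square)
  have ge: "4 \<le> m^2" using m2 power_mono[of 2 m 2] by simp
  define a where "a = (\<lambda>j::nat. if j = 0 then b - m^2 else m^2 - 1)"
  have sum: "(\<Sum>j\<le>(1::nat). a j * b ^ j) = a 0 + a 1 * b"
    by (simp add: atMost_Suc)
  have "(m * n)^2 = m^2 * n^2" by (simp add: power_mult_distrib)
  also have "\<dots> = (b - m^2) + (m^2 - 1) * b"
  proof -
    have "1 \<le> m^2" using ge by linarith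
    from gen[OF this le] show ?thesis using assms(1) by simp
  qed
  finally have x: "(m * n)^2 = (\<Sum>j\<le>(1::nat). a j * b ^ j)"
    unfolding sum by (simp add: a_def)
  have exp: "is_base_expansion b ((m * n)\<^sup>2) 1 a"
  proof -
    have "a 0 < b" "a 1 \<noteq> 0" using le ge assms(1) by (simp_all add: a_def)
    moreover have "a 1 = m^2 - 1" by (simp add: a_def)
    hence "a 1 < b" using le assms(1) by linarith
    ultimately have "\<forall>j\<le>1. a j < b" by (auto simp: le_Suc_eq)
    thus ?thesis unfolding is_base_expansion_def using x \<open>a 1 \<noteq> 0\<close> by blast
  qed
  have "\<forall>j\<le>1. a j = b - 1 - a (1 - j)"
    using le ge assms(1) by (auto simp: a_def le_Suc_eq)
  thus ?thesis unfolding antipalindromic_def using exp by blast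
qed

end
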